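(* There is a $32$-point code in $\mathrm{SO}(4)$ which is a subgroup of $\mathrm{SO}(4)$, is universally optimal, and whose points form the vertices of a regular cross polytope in the sphere $\{X\in\mathbb{R}^{4\times 4}: \|X\|_F=2\}\cong S^{15}$ (i.e., the $32$ points consist of $16$ antipodal pairs, and any two points not antipodal to each other are orthogonal with respect to the Frobenius inner product).
   Context: $\mathrm{SO}(n)$ carries the chordal distance $d_c(U_1,U_2)=\|U_1-U_2\|_F$, from the embedding $\mathrm{SO}(n)\subset\mathbb{R}^{n\times n}$; every element of $\mathrm{SO}(4)$ has Frobenius norm $2$. A code is a finite subset. A function $g:(0,\infty)\to\mathbb{R}$ is completely monotonic if it is smooth and $(-1)^kg^{(k)}\ge0$ for all $k\ge 0$. A code $\mathcal{C}\subset\mathrm{SO}(n)$ is universally optimal if for every completely monotonic $g$ it minimizes $\sum_{x\ne y\in\mathcal{C}} g(d_c(x,y)^2)$ among all codes in $\mathrm{SO}(n)$ of the same size. *)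

theory Defs
  imports "HOL-Analysis.Analysis"
begin

text \<open>SO(4) as 4x4 real matrices; the norm on real^4^4 is the Frobenius norm,
  and the inner product is the Frobenius inner product.\<close>
definition SO4 :: "(real^4^4) set" where
  "SO4 = {U. transpose U ** U = mat 1 \<and> det U = 1}"

definition completely_monotonic :: "(real \<Rightarrow> real) \<Rightarrow> bool" where
  "completely_monotonic g \<longleftrightarrow>
     (\<forall>k::nat. \<forall>x>0. ((deriv ^^ k) g has_real_derivative (deriv ^^ Suc k) g x) (at x)
                    \<and> (-1) ^ k * (deriv ^^ k) g x \<ge> 0)"

definition chordal_dist :: "real^4^4 \<Rightarrow> real^4^4 \<Rightarrow> real" where
  "chordal_dist U V = norm (U - V)"

definition energy :: "(real \<Rightarrow> real) \<Rightarrow> (real^4^4) set \<Rightarrow> real" where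
  "energy g C = (\<Sum>(x, y) \<in> {(x, y). x \<in> C \<and> y \<in> C \<and> x \<noteq> y}. g ((chordal_dist x y)\<^sup>2))"

definition universally_optimal :: "(real^4^4) set \<Rightarrow> bool" where
  "universally_optimal C \<longleftrightarrow> C \<subseteq> SO4 \<and> finite C \<and>
     (\<forall>g. completely_monotonic g \<longrightarrow>
        (\<forall>D. D \<subseteq> SO4 \<and> finite D \<and> card D = card C \<longrightarrow> energy g C \<le> energy g D))"

end

theory Submission
  imports Defs
begin


lemma cm_facts:
  assumes "completely_monotonic g" "x > 0"
  shows "(g has_real_derivative deriv g x) (at x)"
    "(deriv g has_real_derivative deriv (deriv g) x) (at x)"
    "(deriv (deriv g) has_real_derivative deriv (deriv (deriv g)) x) (at x)"
    "deriv g x \<le> 0" "deriv (deriv g) x \<ge> 0" "deriv (deriv (deriv g)) x \<le> 0"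
proof -
  have h: "\<And>k. ((deriv ^^ k) g has_real_derivative (deriv ^^ Suc k) g x) (at x)
                    \<and> (-1) ^ k * (deriv ^^ k) g x \<ge> 0"
    using assms unfolding completely_monotonic_def by blast
  show "(g has_real_derivative deriv g x) (at x)" using h[of 0] by simp
  show "(deriv g has_real_derivative deriv (deriv g) x) (at x)" using h[of 1] by simp
  show "(deriv (deriv g) has_real_derivative deriv (deriv (deriv g)) x) (at x)"
    using h[of 2] by (simp add: numeral_2_eq_2)
  show "deriv g x \<le> 0" using h[of 1] by simp
  show "deriv (deriv g) x \<ge> 0" using h[of 2] by (simp add: numeral_2_eq_2)
  show "deriv (deriv (deriv g)) x \<le> 0" using h[of 3] by (simp add: numeral_3_eq_3)
qed

lemma key_ineq:
  assumes cm: "completely_monotonic g" and s: "0 < s" "s \<le> 16"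
  shows "g s \<ge> g 8 + deriv g 8 * (s - 8) + ((g 16 - g 8 - 8 * deriv g 8) / 64) * (s - 8)^2"
proof -
  define g1 where "g1 = deriv g"
  define g2 where "g2 = deriv g1"
  define g3 where "g3 = deriv g2"
  have D0: "\<And>x. x > 0 \<Longrightarrow> (g has_real_derivative g1 x) (at x)"
   and D1: "\<And>x. x > 0 \<Longrightarrow> (g1 has_real_derivative g2 x) (at x)"
   and D2: "\<And>x. x > 0 \<Longrightarrow> (g2 has_real_derivative g3 x) (at x)"
   and S3: "\<And>x. x > 0 \<Longrightarrow> g3 x \<le> 0"
    using cm_facts[OF cm] unfolding g1_def g2_def g3_def by auto
  define k where "k = (g 16 - g 8 - 8 * g1 8) / 64"
  define \<phi> where "\<phi> s = g s - g 8 - g1 8 * (s - 8) - k * (s - 8)^2" for s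
  define \<phi>1 where "\<phi>1 s = g1 s - g1 8 - 2 * k * (s - 8)" for s
  define \<phi>2 where "\<phi>2 s = g2 s - 2 * k" for s
  have P0: "\<And>x. x > 0 \<Longrightarrow> (\<phi> has_real_derivative \<phi>1 x) (at x)"
    unfolding \<phi>_def \<phi>1_def
    by (rule derivative_eq_intros D0 | simp)+
  have P1: "\<And>x. x > 0 \<Longrightarrow> (\<phi>1 has_real_derivative \<phi>2 x) (at x)"
    unfolding \<phi>2_def \<phi>1_def
    by (rule derivative_eq_intros D1 | simp)+
  have P2: "\<And>x. x > 0 \<Longrightarrow> (\<phi>2 has_real_derivative g3 x) (at x)"
    unfolding \<phi>2_def
    by (rule derivative_eq_intros D2 | simp)+
  have f8: "\<phi> 8 = 0" "\<phi>1 8 = 0" and f16: "\<phi> 16 = 0"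
    by (auto simp: \<phi>_def \<phi>1_def k_def)
  have dec2: "\<phi>2 b \<le> \<phi>2 a" if "0 < a" "a \<le> b" for a b
    apply (rule DERIV_nonpos_imp_nonincreasing[OF that(2)])
    subgoal for x using that P2[of x] S3[of x] by force
    done
  have p8: "\<phi>2 8 \<ge> 0"
  proof (rule ccontr)
    assume "\<not> ?thesis" hence p: "\<phi>2 8 < 0" by simp
    let ?p = "\<phi>2 8"
    have a: "\<phi>1 x \<le> ?p * (x - 8)" if "8 \<le> x" for x
    proof -
      have "(\<lambda>t. \<phi>1 t - ?p * t) x \<le> (\<lambda>t. \<phi>1 t - ?p * t) 8"
        apply (rule DERIV_nonpos_imp_nonincreasing[of 8 x "\<lambda>t. \<phi>1 t - ?p * t", OF that])
        subgoal for t
          apply (rule exI[of _ "\<phi>2 t - ?p"])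
          using dec2[of 8 t] P1[of t]
          by (auto intro!: derivative_eq_intros)
        done
      thus ?thesis using f8 by (simp add: algebra_simps)
    qed
    have "(\<lambda>t. \<phi> t - ?p * (t - 8)^2 / 2) 16 \<le> (\<lambda>t. \<phi> t - ?p * (t - 8)^2 / 2) 8"
      apply (rule DERIV_nonpos_imp_nonincreasing[of 8 16 "\<lambda>t. \<phi> t - ?p * (t - 8)^2 / 2"])
       apply simp
      subgoal for t
        apply (rule exI[of _ "\<phi>1 t - ?p * (t - 8)"])
        using a[of t] P0[of t]
        by (auto intro!: derivative_eq_intros)
      done
    thus False using f8 f16 p by simp
  qed
  show ?thesis
  proof (cases "s \<le> 8")
    case True
    have "\<phi> 8 \<le> \<phi> s"
      apply (rule DERIV_nonpos_imp_nonincreasing[OF True])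
      subgoal for t
        apply (rule exI[of _ "\<phi>1 t"])
        apply (rule conjI)
        using P0[of t] s apply simp
      proof -
        assume t: "s \<le> t" "t \<le> 8"
        have "\<phi>1 t \<le> \<phi>1 8"
          apply (rule DERIV_nonneg_imp_nondecreasing[OF t(2)])
          subgoal for u using P1[of u] dec2[of u 8] p8 s t by force
          done
        thus "\<phi>1 t \<le> 0" using f8 by simp
      qed
      done
    hence "0 \<le> \<phi> s" using f8 by simp
      thus ?thesis by (simp add: \<phi>_def k_def g1_def algebra_simps)
  next
    case False
    have up: "\<phi>1 z < 0" if y: "8 < y" "y \<le> z" "\<phi>1 y < 0" for y z
    proof -
      have "(\<lambda>t. \<phi>1 t - \<phi>2 y * t) 8 \<le> (\<lambda>t. \<phi>1 t - \<phi>2 y * t) y"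
        apply (rule DERIV_nonneg_imp_nondecreasing[of 8 y "\<lambda>t. \<phi>1 t - \<phi>2 y * t"]) using y apply simp
        subgoal for t
          apply (rule exI[of _ "\<phi>2 t - \<phi>2 y"])
          using dec2[of t y] P1[of t]
          by (auto intro!: derivative_eq_intros)
        done
      hence "\<phi>2 y * (y - 8) \<le> \<phi>1 y" using f8 by (simp add: algebra_simps)
      hence neg: "\<phi>2 y < 0" using y
        by (smt (verit) mult_nonneg_nonneg)
      have "\<phi>1 z \<le> \<phi>1 y"
        apply (rule DERIV_nonpos_imp_nonincreasing[OF y(2)])
        subgoal for t using P1[of t] dec2[of y t] neg y by force
        done
      thus ?thesis using y by simp
    qed
    show ?thesis
    proof (cases "\<exists>y. 8 < y \<and> y \<le> s \<and> \<phi>1 y < 0")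
      case True
      then obtain y where y: "8 < y" "y \<le> s" "\<phi>1 y < 0" by blast
      have "\<phi> 16 \<le> \<phi> s"
        apply (rule DERIV_nonpos_imp_nonincreasing[OF s(2)])
        subgoal for t using P0[of t] up[of y t] y s by force
        done
      hence "0 \<le> \<phi> s" using f16 by simp
      thus ?thesis by (simp add: \<phi>_def k_def g1_def algebra_simps)
    next
      case nc: False
      have "\<phi> 8 \<le> \<phi> s"
        apply (rule DERIV_nonneg_imp_nondecreasing[of 8 s \<phi>])
        using False apply simp
        subgoal for t
          apply (rule exI[of _ "\<phi>1 t"])
          using P0[of t] nc f8 by (cases "t = 8") force+
        done
      hence "0 \<le> \<phi> s" using f8 by simp
      thus ?thesis by (simp add: \<phi>_def k_def g1_def algebra_simps)
    qed
  qed
qed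



lemma frame_bound:
  fixes D :: "'a::euclidean_space set"
  assumes "finite D"
  shows "(\<Sum>x\<in>D. x \<bullet> x)^2 \<le> DIM('a) * (\<Sum>x\<in>D. \<Sum>y\<in>D. (x \<bullet> y)^2)"
proof -
  define u where "u b = (\<Sum>x\<in>D. (x \<bullet> b)^2)" for b
  have "(\<Sum>x\<in>D. x \<bullet> x) = (\<Sum>x\<in>D. \<Sum>b\<in>Basis. (x \<bullet> b)^2)"
    by (rule sum.cong[OF refl]) (simp add: euclidean_inner[of x x for x] power2_eq_square)
  also have "\<dots> = (\<Sum>b\<in>Basis. u b)" unfolding u_def by (rule sum.swap)
  finally have e1: "(\<Sum>x\<in>D. x \<bullet> x) = (\<Sum>b\<in>Basis. u b)" .
  have e2: "(\<Sum>b\<in>Basis. u b)^2 \<le> (\<Sum>b\<in>Basis. (u b)^2) * DIM('a)"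
    by (rule sum_squared_le_sum_of_squares)
  have e3: "(\<Sum>b\<in>Basis. (u b)^2) \<le> (\<Sum>b\<in>Basis. \<Sum>c\<in>Basis. (\<Sum>x\<in>D. (x \<bullet> b) * (x \<bullet> c))^2)"
  proof (rule sum_mono)
    fix b :: 'a assume b: "b \<in> Basis"
    have "(u b)^2 = (\<Sum>x\<in>D. (x \<bullet> b) * (x \<bullet> b))^2" unfolding u_def by (simp add: power2_eq_square)
    also have "\<dots> \<le> (\<Sum>c\<in>Basis. (\<Sum>x\<in>D. (x \<bullet> b) * (x \<bullet> c))^2)"
      by (rule member_le_sum[OF b, where f="\<lambda>c. (\<Sum>x\<in>D. (x \<bullet> b) * (x \<bullet> c))^2"]) auto
    finally show "(u b)^2 \<le> \<dots>" .
  qed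
  have e4: "(\<Sum>b\<in>Basis. \<Sum>c\<in>Basis. (\<Sum>x\<in>D. (x \<bullet> b) * (x \<bullet> c))^2)
        = (\<Sum>x\<in>D. \<Sum>y\<in>D. (x \<bullet> y)^2)"
  proof -
    define F where "F x y b c = ((x \<bullet> b) * (y \<bullet> b)) * ((x \<bullet> c) * (y \<bullet> c))" for x y b c :: 'a
    have "(\<Sum>b\<in>Basis. \<Sum>c\<in>Basis. (\<Sum>x\<in>D. (x \<bullet> b) * (x \<bullet> c))^2)
       = (\<Sum>b\<in>Basis. \<Sum>c\<in>Basis. \<Sum>x\<in>D. \<Sum>y\<in>D. F x y b c)"
    proof (intro sum.cong refl)
      fix b c :: 'a
      show "(\<Sum>x\<in>D. (x \<bullet> b) * (x \<bullet> c))^2 = (\<Sum>x\<in>D. \<Sum>y\<in>D. F x y b c)"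
        unfolding power2_eq_square sum_product F_def
        by (intro sum.cong refl) (simp add: algebra_simps)
    qed
    also have "\<dots> = (\<Sum>b\<in>Basis. \<Sum>x\<in>D. \<Sum>c\<in>Basis. \<Sum>y\<in>D. F x y b c)"
      by (rule sum.cong[OF refl], rule sum.swap)
    also have "\<dots> = (\<Sum>x\<in>D. \<Sum>b\<in>Basis. \<Sum>c\<in>Basis. \<Sum>y\<in>D. F x y b c)"
      by (rule sum.swap)
    also have "\<dots> = (\<Sum>x\<in>D. \<Sum>b\<in>Basis. \<Sum>y\<in>D. \<Sum>c\<in>Basis. F x y b c)"
      by (rule sum.cong[OF refl], rule sum.cong[OF refl], rule sum.swap)
    also have "\<dots> = (\<Sum>x\<in>D. \<Sum>y\<in>D. \<Sum>b\<in>Basis. \<Sum>c\<in>Basis. F x y b c)"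
      by (rule sum.cong[OF refl], rule sum.swap)
    also have "\<dots> = (\<Sum>x\<in>D. \<Sum>y\<in>D. (x \<bullet> y)^2)"
    proof (intro sum.cong refl)
      fix x y :: 'a
      have "(x \<bullet> y)^2 = (\<Sum>b\<in>Basis. (x \<bullet> b) * (y \<bullet> b)) * (\<Sum>c\<in>Basis. (x \<bullet> c) * (y \<bullet> c))"
        by (simp add: power2_eq_square euclidean_inner[of x y])
      thus "(\<Sum>b\<in>Basis. \<Sum>c\<in>Basis. F x y b c) = (x \<bullet> y)^2"
        unfolding sum_product F_def by simp
    qed
    finally show ?thesis .
  qed
  have e34: "(\<Sum>b\<in>Basis. (u b)^2) \<le> (\<Sum>x\<in>D. \<Sum>y\<in>D. (x \<bullet> y)^2)" using e3 e4 by simp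
  have "(\<Sum>x\<in>D. x \<bullet> x)^2 \<le> (\<Sum>x\<in>D. \<Sum>y\<in>D. (x \<bullet> y)^2) * DIM('a)"
    using e1 order_trans[OF e2 mult_right_mono[OF e34]] by simp
  thus ?thesis by (simp add: mult.commute)
qed



lemma kappa_nonneg:
  assumes cm: "completely_monotonic g"
  shows "g 16 - g 8 - 8 * deriv g 8 \<ge> 0"
proof -
  have "(\<lambda>t. g t - deriv g 8 * t) 8 \<le> (\<lambda>t. g t - deriv g 8 * t) 16"
    apply (rule DERIV_nonneg_imp_nondecreasing[of 8 16 "\<lambda>t. g t - deriv g 8 * t"])
     apply simp
    subgoal for x
      apply (rule exI[of _ "deriv g x - deriv g 8"])
    proof
      assume x: "8 \<le> x" "x \<le> 16"
      show "((\<lambda>t. g t - deriv g 8 * t) has_real_derivative deriv g x - deriv g 8) (at x)"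
        using cm_facts(1)[OF cm, of x] x by (auto intro!: derivative_eq_intros)
      have "deriv g 8 \<le> deriv g x"
        apply (rule DERIV_nonneg_imp_nondecreasing[OF x(1)])
        subgoal for y using cm_facts(2,5)[OF cm, of y] by force
        done
      thus "deriv g x - deriv g 8 \<ge> 0" by simp
    qed
    done
  thus ?thesis by simp
qed

lemma SO4_inner_self:
  assumes "X \<in> SO4" shows "X \<bullet> X = 4"
proof -
  have o: "transpose X ** X = mat 1" using assms by (simp add: SO4_def)
  have col: "(\<Sum>i\<in>UNIV. X$i$j * X$i$j) = 1" for j
  proof -
    have "(transpose X ** X)$j$j = 1" using o by (simp add: mat_def)
    thus ?thesis by (simp add: matrix_matrix_mult_def transpose_def)
  qed
  have "X \<bullet> X = (\<Sum>i\<in>UNIV. \<Sum>j\<in>UNIV. X$i$j * X$i$j)"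
    by (simp add: inner_vec_def)
  also have "\<dots> = (\<Sum>j\<in>UNIV. \<Sum>i\<in>UNIV. X$i$j * X$i$j)" by (rule sum.swap)
  also have "\<dots> = 4" by (simp add: col)
  finally show ?thesis .
qed

lemma dist_sq:
  fixes x y :: "real^4^4"
  assumes "x \<bullet> x = 4" "y \<bullet> y = 4"
  shows "(chordal_dist x y)^2 = 8 - 2 * (x \<bullet> y)"
  using assms unfolding chordal_dist_def power2_norm_eq_inner
  by (simp add: inner_diff_left inner_diff_right inner_commute)

lemma energy_split:
  assumes "finite D"
  shows "energy g D = (\<Sum>x\<in>D. \<Sum>y\<in>D - {x}. g ((chordal_dist x y)^2))"
proof -
  have "{(x, y). x \<in> D \<and> y \<in> D \<and> x \<noteq> y} = Sigma D (\<lambda>x. D - {x})" by auto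
  thus ?thesis unfolding energy_def using assms
    by (simp add: sum.Sigma)
qed

lemma lower_bound:
  assumes cm: "completely_monotonic g" and D: "D \<subseteq> SO4" "finite D" "card D = 32"
  shows "energy g D \<ge> 960 * g 8 + 32 * g 16"
proof -
  define g1 where "g1 = deriv g 8"
  define k where "k = (g 16 - g 8 - 8 * g1) / 64"
  define H where "H t = g 8 - 2 * g1 * t + 4 * k * t^2" for t :: real
  have k0: "k \<ge> 0" using kappa_nonneg[OF cm] by (simp add: k_def g1_def)
  have g10: "g1 \<le> 0" using cm_facts(4)[OF cm, of 8] by (simp add: g1_def)
  have nn: "x \<bullet> x = 4" if "x \<in> D" for x using SO4_inner_self that D by blast
  have pt: "g ((chordal_dist x y)^2) \<ge> H (x \<bullet> y)" if "x \<in> D" "y \<in> D" "x \<noteq> y" for x y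
  proof -
    have ds: "(chordal_dist x y)^2 = 8 - 2 * (x \<bullet> y)" using dist_sq nn that by blast
    have "norm (x - y) > 0" using that by simp
    hence pos: "0 < 8 - 2 * (x \<bullet> y)" using ds unfolding chordal_dist_def
      by (metis zero_less_power)
    have "\<bar>x \<bullet> y\<bar> \<le> norm x * norm y" by (rule Cauchy_Schwarz_ineq2)
    moreover have "norm x = 2" "norm y = 2" using nn that by (simp_all add: norm_eq_sqrt_inner)
    ultimately have le: "8 - 2 * (x \<bullet> y) \<le> 16" by simp
    show ?thesis using key_ineq[OF cm pos le] unfolding ds H_def k_def g1_def
      by (simp add: power2_eq_square algebra_simps)
  qed
  have "energy g D \<ge> (\<Sum>x\<in>D. \<Sum>y\<in>D - {x}. H (x \<bullet> y))"
    unfolding energy_split[OF D(2)] using pt by (intro sum_mono) auto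
  also have "(\<Sum>x\<in>D. \<Sum>y\<in>D - {x}. H (x \<bullet> y)) = (\<Sum>x\<in>D. (\<Sum>y\<in>D. H (x \<bullet> y)) - H 4)"
  proof (rule sum.cong[OF refl])
    fix x assume x: "x \<in> D"
    show "(\<Sum>y\<in>D - {x}. H (x \<bullet> y)) = (\<Sum>y\<in>D. H (x \<bullet> y)) - H 4"
      using sum.remove[OF D(2) x, of "\<lambda>y. H (x \<bullet> y)"] nn[OF x] by simp
  qed
  also have "\<dots> = 1024 * g 8 - 2 * g1 * (\<Sum>x\<in>D. \<Sum>y\<in>D. x \<bullet> y)
       + 4 * k * (\<Sum>x\<in>D. \<Sum>y\<in>D. (x \<bullet> y)^2) - 32 * H 4"
    by (simp add: H_def sum.distrib sum_subtractf sum_distrib_left D(3))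
  finally have E: "energy g D \<ge> 1024 * g 8 - 2 * g1 * (\<Sum>x\<in>D. \<Sum>y\<in>D. x \<bullet> y)
       + 4 * k * (\<Sum>x\<in>D. \<Sum>y\<in>D. (x \<bullet> y)^2) - 32 * H 4" .
  have s1: "(\<Sum>x\<in>D. \<Sum>y\<in>D. x \<bullet> y) \<ge> 0"
  proof -
    have "(\<Sum>x\<in>D. \<Sum>y\<in>D. x \<bullet> y) = (\<Sum>x\<in>D. x) \<bullet> (\<Sum>y\<in>D. y)"
      by (simp add: inner_sum_left inner_sum_right, rule sum.swap)
    thus ?thesis by simp
  qed
  have s2: "(\<Sum>x\<in>D. \<Sum>y\<in>D. (x \<bullet> y)^2) \<ge> 1024"
  proof -
    have "(\<Sum>x\<in>D. x \<bullet> x) = 128" using nn D(3) by simp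
    with frame_bound[OF D(2)] show ?thesis by simp
  qed
  have "- 2 * g1 * (\<Sum>x\<in>D. \<Sum>y\<in>D. x \<bullet> y) \<ge> 0" using s1 g10
    by (simp add: mult_nonpos_nonneg)
  moreover have "4 * k * (\<Sum>x\<in>D. \<Sum>y\<in>D. (x \<bullet> y)^2) \<ge> 4 * k * 1024"
    using s2 k0 by (intro mult_left_mono) auto
  ultimately have "energy g D \<ge> 1024 * g 8 + 4096 * k - 32 * H 4" using E by linarith
  thus ?thesis unfolding H_def k_def by (simp add: field_simps)
qed



type_synonym quat = "real \<times> real \<times> real \<times> real"

fun qmul :: "quat \<Rightarrow> quat \<Rightarrow> quat" where
  "qmul (a0,a1,a2,a3) (b0,b1,b2,b3) =
    (a0*b0 - a1*b1 - a2*b2 - a3*b3, a0*b1 + a1*b0 + a2*b3 - a3*b2,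
     a0*b2 - a1*b3 + a2*b0 + a3*b1, a0*b3 + a1*b2 - a2*b1 + a3*b0)"

fun qconj :: "quat \<Rightarrow> quat" where
  "qconj (a0,a1,a2,a3) = (a0,-a1,-a2,-a3)"

fun qneg :: "quat \<Rightarrow> quat" where
  "qneg (a0,a1,a2,a3) = (-a0,-a1,-a2,-a3)"

fun qre :: "quat \<Rightarrow> real" where
  "qre (a0,a1,a2,a3) = a0"

definition qc :: "4 \<Rightarrow> quat \<Rightarrow> real" where
  "qc i q = (case q of (q0,q1,q2,q3) \<Rightarrow> if i = 1 then q0 else if i = 2 then q1 else if i = 3 then q2 else q3)"

definition qe :: "4 \<Rightarrow> quat" where
  "qe i = (if i = 1 then (1,0,0,0) else if i = 2 then (0,1,0,0) else if i = 3 then (0,0,1,0) else (0,0,0,1))"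

definition Lm :: "quat \<Rightarrow> real^4^4" where
  "Lm a = (\<chi> i j. qc i (qmul a (qe j)))"
definition Rm :: "quat \<Rightarrow> real^4^4" where
  "Rm b = (\<chi> i j. qc i (qmul (qe j) b))"

lemma four_neq: "(1::4) \<noteq> 2" "(1::4) \<noteq> 3" "(1::4) \<noteq> 4" "(2::4) \<noteq> 3" "(2::4) \<noteq> 4" "(3::4) \<noteq> 4"
  by simp_all


lemmas qsimps = vec_eq_iff forall_4 matrix_matrix_mult_def sum_4 Lm_def Rm_def qc_def qe_def
   transpose_def mat_def

lemma LL: "Lm a ** Lm c = Lm (qmul a c)"
  by (cases a, cases c) (simp add: qsimps algebra_simps)

lemma RR: "Rm b ** Rm d = Rm (qmul d b)"
  by (cases b, cases d) (simp add: qsimps algebra_simps)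

lemma LR: "Lm a ** Rm b = Rm b ** Lm a"
  by (cases a, cases b) (simp add: qsimps algebra_simps)

lemma Lt: "transpose (Lm a) = Lm (qconj a)"
  by (cases a) (simp add: qsimps)

lemma Rt: "transpose (Rm a) = Rm (qconj a)"
  by (cases a) (simp add: qsimps)

lemma L1: "Lm (1,0,0,0) = mat 1"
  by (simp add: qsimps)

lemma R1: "Rm (1,0,0,0) = mat 1"
  by (simp add: qsimps)

lemma Lneg: "Lm (qneg a) = - Lm a"
  by (cases a) (simp add: qsimps)

lemma Rneg: "Rm (qneg a) = - Rm a"
  by (cases a) (simp add: qsimps)

lemma trLR: "(\<Sum>j\<in>UNIV. (Lm u ** Rm v)$j$j) = 4 * qre u * qre v"
  by (cases u, cases v) (simp add: qsimps algebra_simps)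

lemma inner_trace:
  fixes X Y :: "real^4^4"
  shows "X \<bullet> Y = (\<Sum>j\<in>UNIV. (transpose X ** Y)$j$j)"
proof -
  have "X \<bullet> Y = (\<Sum>i\<in>UNIV. \<Sum>j\<in>UNIV. X$i$j * Y$i$j)"
    by (simp add: inner_vec_def)
  also have "\<dots> = (\<Sum>j\<in>UNIV. \<Sum>i\<in>UNIV. X$i$j * Y$i$j)" by (rule sum.swap)
  also have "\<dots> = (\<Sum>j\<in>UNIV. (transpose X ** Y)$j$j)"
    by (simp add: matrix_matrix_mult_def transpose_def)
  finally show ?thesis .
qed

definition M :: "quat \<Rightarrow> quat \<Rightarrow> real^4^4" where
  "M a b = Lm a ** Rm b"

lemma M_mult: "M a b ** M c d = M (qmul a c) (qmul d b)"
proof -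
  have "M a b ** M c d = Lm a ** (Rm b ** Lm c) ** Rm d" unfolding M_def by (simp add: matrix_mul_assoc)
  also have "\<dots> = (Lm a ** Lm c) ** (Rm b ** Rm d)" by (simp add: LR[of c b, symmetric] matrix_mul_assoc)
  finally show ?thesis by (simp add: LL RR M_def)
qed

lemma M_transpose: "transpose (M a b) = M (qconj a) (qconj b)"
  unfolding M_def matrix_transpose_mul Lt Rt by (rule LR[symmetric])

lemma M_one: "M (1,0,0,0) (1,0,0,0) = mat 1"
  unfolding M_def by (simp add: L1 R1)

lemma M_negL: "M (qneg a) b = - M a b" unfolding M_def by (simp add: Lneg matrix_matrix_mult_def vec_eq_iff sum_negf)
lemma M_negR: "M a (qneg b) = - M a b" unfolding M_def by (simp add: Rneg matrix_matrix_mult_def vec_eq_iff sum_negf)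

lemma M_inner: "M a b \<bullet> M c d = 4 * qre (qmul (qconj a) c) * qre (qmul d (qconj b))"
  unfolding inner_trace M_transpose M_mult by (simp add: M_def trLR)



definition q8 :: "quat set" where
  "q8 = {(1,0,0,0), (-1,0,0,0), (0,1,0,0), (0,-1,0,0), (0,0,1,0), (0,0,-1,0), (0,0,0,1), (0,0,0,-1)}"
definition p4 :: "quat set" where
  "p4 = {(1,0,0,0), (0,1,0,0), (0,0,1,0), (0,0,0,1)}"

lemma q8_mul: "a \<in> q8 \<Longrightarrow> b \<in> q8 \<Longrightarrow> qmul a b \<in> q8"
  by (auto simp: q8_def)
lemma q8_conj: "a \<in> q8 \<Longrightarrow> qconj a \<in> q8"
  by (auto simp: q8_def)
lemma q8_neg: "a \<in> q8 \<Longrightarrow> qneg a \<in> q8"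
  by (auto simp: q8_def)
lemma q8_unit: "a \<in> q8 \<Longrightarrow> qmul (qconj a) a = (1,0,0,0) \<and> qmul a (qconj a) = (1,0,0,0)"
  by (auto simp: q8_def)
lemma q8_re1: "a \<in> q8 \<Longrightarrow> c \<in> q8 \<Longrightarrow> qre (qmul (qconj a) c) \<noteq> 0 \<Longrightarrow> c = a \<or> c = qneg a"
  by (auto simp: q8_def)
lemma q8_re2: "b \<in> q8 \<Longrightarrow> d \<in> q8 \<Longrightarrow> qre (qmul d (qconj b)) \<noteq> 0 \<Longrightarrow> d = b \<or> d = qneg b"
  by (auto simp: q8_def)
lemma q8_split: "b \<in> q8 \<Longrightarrow> b \<in> p4 \<or> qneg b \<in> p4"
  by (auto simp: q8_def p4_def)
lemma p4_q8: "p4 \<subseteq> q8" by (auto simp: q8_def p4_def)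
lemma p4_neg: "b \<in> p4 \<Longrightarrow> qneg b \<notin> p4" by (auto simp: p4_def)
lemma qneg_neg: "qneg (qneg a) = a" by (cases a) simp
lemma qre_neg: "qre (qmul x (qneg y)) = - qre (qmul x y)" by (cases x, cases y) simp
lemma q8_sqrt: "a \<in> q8 \<Longrightarrow> \<exists>p. qmul p p = a"
proof -
  assume "a \<in> q8"
  hence "a = (1,0,0,0) \<or> a = (-1,0,0,0) \<or> a = (0,1,0,0) \<or> a = (0,-1,0,0) \<or> a = (0,0,1,0)
     \<or> a = (0,0,-1,0) \<or> a = (0,0,0,1) \<or> a = (0,0,0,-1)" by (simp add: q8_def)
  moreover have "qmul (1,0,0,0) (1,0,0,0) = (1,0,0,0)" by simp
  moreover have "qmul (0,1,0,0) (0,1,0,0) = (-1,0,0,0)" by simp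
  moreover have "qmul (1/sqrt 2,1/sqrt 2,0,0) (1/sqrt 2,1/sqrt 2,0,0) = (0,1,0,0)"
    by (simp add: divide_simps)
  moreover have "qmul (1/sqrt 2,-1/sqrt 2,0,0) (1/sqrt 2,-1/sqrt 2,0,0) = (0,-1,0,0)"
    by (simp add: divide_simps)
  moreover have "qmul (1/sqrt 2,0,1/sqrt 2,0) (1/sqrt 2,0,1/sqrt 2,0) = (0,0,1,0)"
    by (simp add: divide_simps)
  moreover have "qmul (1/sqrt 2,0,-1/sqrt 2,0) (1/sqrt 2,0,-1/sqrt 2,0) = (0,0,-1,0)"
    by (simp add: divide_simps)
  moreover have "qmul (1/sqrt 2,0,0,1/sqrt 2) (1/sqrt 2,0,0,1/sqrt 2) = (0,0,0,1)"
    by (simp add: divide_simps)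
  moreover have "qmul (1/sqrt 2,0,0,-1/sqrt 2) (1/sqrt 2,0,0,-1/sqrt 2) = (0,0,0,-1)"
    by (simp add: divide_simps)
  ultimately show ?thesis by metis
qed

definition Cset :: "(real^4^4) set" where
  "Cset = (\<lambda>(a,b). M a b) ` (q8 \<times> q8)"

lemma M_SO4: assumes "a \<in> q8" "b \<in> q8" shows "M a b \<in> SO4"
proof -
  have o: "transpose (M a b) ** M a b = mat 1"
  proof -
    have "transpose (M a b) ** M a b = M (qmul (qconj a) a) (qmul b (qconj b))"
      unfolding M_transpose M_mult ..
    also have "\<dots> = M (1,0,0,0) (1,0,0,0)" using q8_unit[OF assms(1)] q8_unit[OF assms(2)] by simp
    finally show ?thesis using M_one by simp
  qed
  obtain p q where pq: "qmul p p = a" "qmul q q = b" using q8_sqrt assms by metis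
  have "M a b = M p q ** M p q" unfolding M_mult pq ..
  hence "det (M a b) = (det (M p q))^2" by (simp add: det_mul power2_eq_square)
  hence nn: "det (M a b) \<ge> 0" by simp
  have "det (transpose (M a b) ** M a b) = 1" using o by simp
  hence "(det (M a b))^2 = 1" by (simp add: det_mul det_transpose power2_eq_square)
  hence "det (M a b) = 1" using nn unfolding power2_eq_1_iff by auto
  thus ?thesis using o by (simp add: SO4_def)
qed

lemma Cset_SO4: "Cset \<subseteq> SO4" unfolding Cset_def using M_SO4 by auto

lemma Cset_p4: "Cset = (\<lambda>(a,b). M a b) ` (q8 \<times> p4)"
proof
  show "(\<lambda>(a,b). M a b) ` (q8 \<times> p4) \<subseteq> Cset" unfolding Cset_def using p4_q8 by auto
  show "Cset \<subseteq> (\<lambda>(a,b). M a b) ` (q8 \<times> p4)"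
  proof
    fix x assume "x \<in> Cset"
    then obtain a b where ab: "a \<in> q8" "b \<in> q8" "x = M a b" unfolding Cset_def by auto
    show "x \<in> (\<lambda>(a,b). M a b) ` (q8 \<times> p4)"
    proof (cases "b \<in> p4")
      case True thus ?thesis using ab by auto
    next
      case False
      hence "qneg b \<in> p4" using q8_split ab by blast
      moreover have "x = M (qneg a) (qneg b)" using ab by (simp add: M_negL M_negR)
      ultimately show ?thesis using q8_neg[OF ab(1)] by force
    qed
  qed
qed

lemma card_q8: "card q8 = 8" by (simp add: q8_def)
lemma card_p4: "card p4 = 4" by (simp add: p4_def)

lemma M_self: assumes "a \<in> q8" "b \<in> q8" shows "M a b \<bullet> M a b = 4"
proof -
  have "qmul (qconj a) a = (1,0,0,0)" "qmul b (qconj b) = (1,0,0,0)" using q8_unit assms by blast+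
  thus ?thesis unfolding M_inner by simp
qed

lemma inj_M_aux:
  assumes h: "a \<in> q8" "b \<in> p4" "c \<in> q8" "d \<in> p4" "M a b = M c d"
  shows "a = c \<and> b = d"
proof -
  have bq: "b \<in> q8" "d \<in> q8" using h p4_q8 by blast+
  have "M a b \<bullet> M c d = 4" using h(5) M_self[OF h(3) bq(2)] by simp
  hence e: "qre (qmul (qconj a) c) * qre (qmul d (qconj b)) = 1" by (simp add: M_inner)
  hence "qre (qmul d (qconj b)) \<noteq> 0" by (metis mult_zero_right zero_neq_one)
  hence "d = b" using q8_re2[OF bq(1) bq(2)] p4_neg h(2,4) by blast
  hence e2: "qre (qmul (qconj a) c) = 1" using e q8_unit[OF bq(1)] by simp
  hence "c = a \<or> c = qneg a" using q8_re1[OF h(1) h(3)] by simp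
  moreover have "c \<noteq> qneg a"
  proof
    assume "c = qneg a"
    hence "qre (qmul (qconj a) c) = - 1" using qre_neg[of "qconj a" a] q8_unit[OF h(1)] by simp
    thus False using e2 by simp
  qed
  ultimately show "a = c \<and> b = d" using \<open>d = b\<close> by simp
qed

lemma inj_M: "inj_on (\<lambda>(a,b). M a b) (q8 \<times> p4)"
proof (rule inj_onI)
  fix p q assume p: "p \<in> q8 \<times> p4" and q: "q \<in> q8 \<times> p4"
    and e: "(\<lambda>(a,b). M a b) p = (\<lambda>(a,b). M a b) q"
  obtain a b where ab: "p = (a,b)" by (metis prod.exhaust)
  obtain c d where cd: "q = (c,d)" by (metis prod.exhaust)
  have "a \<in> q8" "b \<in> p4" "c \<in> q8" "d \<in> p4" "M a b = M c d" using p q e unfolding ab cd by simp_all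
  from inj_M_aux[OF this] show "p = q" unfolding ab cd by simp
qed

lemma Cset_E: assumes "x \<in> Cset" shows "\<exists>a b. a \<in> q8 \<and> b \<in> q8 \<and> x = M a b"
proof -
  obtain p where p: "p \<in> q8 \<times> q8" "x = (\<lambda>(a,b). M a b) p" using assms unfolding Cset_def by (rule imageE)
  obtain a b where ab: "p = (a,b)" by (metis prod.exhaust)
  have "x = M a b" "a \<in> q8" "b \<in> q8" using p unfolding ab by simp_all
  thus ?thesis by blast
qed

lemma Cset_I: "a \<in> q8 \<Longrightarrow> b \<in> q8 \<Longrightarrow> M a b \<in> Cset"
  unfolding Cset_def by (rule image_eqI[of _ _ "(a,b)"]) simp_all

lemma card_Cset: "card Cset = 32"
  unfolding Cset_p4 using inj_M card_image[OF inj_M] card_q8 card_p4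
  by (simp add: card_cartesian_product)

lemma finite_Cset: "finite Cset"
proof -
  have "finite q8" unfolding q8_def by simp
  thus ?thesis unfolding Cset_def by simp
qed

lemma Cset_orth: assumes "x \<in> Cset" "y \<in> Cset" "y \<noteq> x" "y \<noteq> - x" shows "x \<bullet> y = 0"
proof (rule ccontr)
  assume nz: "x \<bullet> y \<noteq> 0"
  obtain a b where ab: "a \<in> q8" "b \<in> q8" "x = M a b" using Cset_E[OF assms(1)] by blast
  obtain c d where cd: "c \<in> q8" "d \<in> q8" "y = M c d" using Cset_E[OF assms(2)] by blast
  have "qre (qmul (qconj a) c) \<noteq> 0" "qre (qmul d (qconj b)) \<noteq> 0"
    using nz unfolding ab(3) cd(3) M_inner by auto
  hence c: "c = a \<or> c = qneg a" and d: "d = b \<or> d = qneg b" using q8_re1 q8_re2 ab cd by blast+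
  have "y = x \<or> y = - x" using c d unfolding ab(3) cd(3) by (auto simp: M_negL M_negR)
  thus False using assms by blast
qed

lemma Cset_mult: assumes "x \<in> Cset" "y \<in> Cset" shows "x ** y \<in> Cset"
proof -
  obtain a b where ab: "a \<in> q8" "b \<in> q8" "x = M a b" using Cset_E[OF assms(1)] by blast
  obtain c d where cd: "c \<in> q8" "d \<in> q8" "y = M c d" using Cset_E[OF assms(2)] by blast
  show ?thesis unfolding ab(3) cd(3) M_mult by (rule Cset_I; rule q8_mul) (simp_all add: ab cd)
qed

lemma Cset_transpose: assumes "x \<in> Cset" shows "transpose x \<in> Cset"
proof -
  obtain a b where ab: "a \<in> q8" "b \<in> q8" "x = M a b" using Cset_E[OF assms(1)] by blast
  show ?thesis unfolding ab(3) M_transpose by (rule Cset_I; rule q8_conj) (simp_all add: ab)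
qed

lemma Cset_neg: assumes "x \<in> Cset" shows "- x \<in> Cset"
proof -
  obtain a b where ab: "a \<in> q8" "b \<in> q8" "x = M a b" using Cset_E[OF assms(1)] by blast
  show ?thesis unfolding ab(3) M_negL[symmetric] by (rule Cset_I[OF q8_neg[OF ab(1)] ab(2)])
qed

lemma Cset_one: "mat 1 \<in> Cset"
  unfolding M_one[symmetric] by (rule Cset_I) (simp_all add: q8_def)



lemma energy_C: "energy g Cset = 960 * g 8 + 32 * g 16"
proof -
  have inner: "\<And>x. x \<in> Cset \<Longrightarrow> x \<bullet> x = 4" using SO4_inner_self Cset_SO4 by blast
  have row: "(\<Sum>y\<in>Cset - {x}. g ((chordal_dist x y)^2)) = g 16 + 30 * g 8" if x: "x \<in> Cset" for x
  proof -
    have xx: "x \<bullet> x = 4" using inner x .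
    have nx: "- x \<in> Cset" using Cset_neg x .
    have ne: "- x \<noteq> x"
    proof
      assume "- x = x" hence "(- x) \<bullet> x = x \<bullet> x" by metis
      thus False using xx by simp
    qed
    have split: "Cset - {x} = insert (- x) (Cset - {x, - x})" using nx ne by auto
    have fin: "finite (Cset - {x, - x})" using finite_Cset by simp
    have cardr: "card (Cset - {x, - x}) = 30"
    proof -
      have "card (Cset - {x, - x}) = card Cset - card {x, - x}"
        using x nx finite_Cset by (intro card_Diff_subset) auto
      thus ?thesis using card_Cset ne by simp
    qed
    have "(\<Sum>y\<in>Cset - {x}. g ((chordal_dist x y)^2))
        = g ((chordal_dist x (- x))^2) + (\<Sum>y\<in>Cset - {x, - x}. g ((chordal_dist x y)^2))"
      unfolding split using fin by (subst sum.insert) auto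
    also have "g ((chordal_dist x (- x))^2) = g 16"
      using dist_sq[OF xx inner[OF nx]] xx by simp
    also have "(\<Sum>y\<in>Cset - {x, - x}. g ((chordal_dist x y)^2)) = (\<Sum>y\<in>Cset - {x, - x}. g 8)"
    proof (rule sum.cong[OF refl])
      fix y assume y: "y \<in> Cset - {x, - x}"
      hence "x \<bullet> y = 0" using Cset_orth[OF x] by (metis DiffD1 DiffD2 insertCI minus_minus)
      thus "g ((chordal_dist x y)^2) = g 8" using dist_sq[OF xx inner] y by simp
    qed
    also have "\<dots> = 30 * g 8" using cardr by simp
    finally show ?thesis .
  qed
  have "energy g Cset = (\<Sum>x\<in>Cset. g 16 + 30 * g 8)"
    unfolding energy_split[OF finite_Cset] by (rule sum.cong[OF refl]) (rule row)
  also have "\<dots> = 960 * g 8 + 32 * g 16" using card_Cset by simp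
  finally show ?thesis .
qed

theorem theorem8p2:
  shows "\<exists>C :: (real^4^4) set. C \<subseteq> SO4 \<and> finite C \<and> card C = 32
     \<and> mat 1 \<in> C \<and> (\<forall>x\<in>C. \<forall>y\<in>C. x ** y \<in> C) \<and> (\<forall>x\<in>C. transpose x \<in> C)
     \<and> universally_optimal C
     \<and> (\<forall>x\<in>C. norm x = 2)
     \<and> (\<forall>x\<in>C. - x \<in> C)
     \<and> (\<forall>x\<in>C. \<forall>y\<in>C. y \<noteq> x \<and> y \<noteq> - x \<longrightarrow> x \<bullet> y = 0)"
proof (intro exI[of _ Cset] conjI ballI impI)
  show "Cset \<subseteq> SO4" by (rule Cset_SO4)
  show "finite Cset" by (rule finite_Cset)
  show "card Cset = 32" by (rule card_Cset)
  show "mat 1 \<in> Cset" by (rule Cset_one)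
  show "\<And>x y. x \<in> Cset \<Longrightarrow> y \<in> Cset \<Longrightarrow> x ** y \<in> Cset" by (rule Cset_mult)
  show "\<And>x. x \<in> Cset \<Longrightarrow> transpose x \<in> Cset" by (rule Cset_transpose)
  show "\<And>x. x \<in> Cset \<Longrightarrow> - x \<in> Cset" by (rule Cset_neg)
  show "\<And>x y. x \<in> Cset \<Longrightarrow> y \<in> Cset \<Longrightarrow> y \<noteq> x \<and> y \<noteq> - x \<Longrightarrow> x \<bullet> y = 0"
    using Cset_orth by blast
  show "\<And>x. x \<in> Cset \<Longrightarrow> norm x = 2"
  proof -
    fix x assume "x \<in> Cset"
    hence "x \<bullet> x = 4" using SO4_inner_self Cset_SO4 by blast
    thus "norm x = 2" by (simp add: norm_eq_sqrt_inner)
  qed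
  show "universally_optimal Cset"
    unfolding universally_optimal_def
    using Cset_SO4 finite_Cset card_Cset energy_C lower_bound by simp
qed

end
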